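(* Let $\mathbb{K}$ be a field of characteristic zero and let $n\in\mathbb{N}$ with $n\geq 4$. Let $V$ be an $n$-dimensional $\mathbb{K}$-vector space. Then the family of functions $\{\phi_{n,t}\}_{t\in\mathbb{K}}$ on $C^2(V;V)$ is infinite, i.e. the set $\{\phi_{n,t}: t\in\mathbb{K}\}$ is an infinite set of functions.
   Context: An anti-commutative algebra is a vector space $V$ with a bilinear map $\mu:V\times V\to V$ satisfying $\mu(X,Y)=-\mu(Y,X)$. For $\alpha,\beta,\gamma\in\mathbb{K}$, an $(\alpha,\beta,\gamma)$-derivation of $(V,\mu)$ is a linear map $D:V\to V$ with $\alpha D\mu(X,Y)=\beta\mu(DX,Y)+\gamma\mu(X,DY)$ for all $X,Y\in V$; their space is $\mathcal{D}(\alpha,\beta,\gamma)(V,\mu)$. $C^2(V;V)$ is the space of antisymmetric bilinear maps $V\times V\to V$, and for $t\in\mathbb{K}$, $\phi_{n,t}:C^2(V;V)\to\{0,1,\dots,n^2\}$ is defined by $\phi_{n,t}(\mu)=\dim\mathcal{D}(t,1,0)(V,\mu)$. *)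

theory Defs
  imports "HOL-Analysis.Analysis" "HOL-Library.Function_Algebras"
begin

definition C2 :: "('k::field \<Rightarrow> 'v::ab_group_add \<Rightarrow> 'v) \<Rightarrow> ('v \<Rightarrow> 'v \<Rightarrow> 'v) set" where
  "C2 sc = {mu. (\<forall>x. Vector_Spaces.linear sc sc (mu x))
              \<and> (\<forall>y. Vector_Spaces.linear sc sc (\<lambda>x. mu x y))
              \<and> (\<forall>x y. mu x y = - mu y x)}"

definition gen_derivations ::
  "('k::field \<Rightarrow> 'v::ab_group_add \<Rightarrow> 'v) \<Rightarrow> 'k \<Rightarrow> 'k \<Rightarrow> 'k \<Rightarrow> ('v \<Rightarrow> 'v \<Rightarrow> 'v) \<Rightarrow> ('v \<Rightarrow> 'v) set" where
  "gen_derivations sc \<alpha> \<beta> \<gamma> mu = {D. Vector_Spaces.linear sc sc D \<and>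
     (\<forall>X Y. sc \<alpha> (D (mu X Y)) = sc \<beta> (mu (D X) Y) + sc \<gamma> (mu X (D Y)))}"

definition fun_scale :: "('k \<Rightarrow> 'v \<Rightarrow> 'v) \<Rightarrow> 'k \<Rightarrow> ('v \<Rightarrow> 'v) \<Rightarrow> ('v \<Rightarrow> 'v)" where
  "fun_scale sc c f = (\<lambda>x. sc c (f x))"

definition phi :: "('k::field \<Rightarrow> 'v::ab_group_add \<Rightarrow> 'v) \<Rightarrow> 'k \<Rightarrow> ('v \<Rightarrow> 'v \<Rightarrow> 'v) \<Rightarrow> nat" where
  "phi sc t mu = vector_space.dim (fun_scale sc) (gen_derivations sc t 1 0 mu)"

end

theory Submission
  imports Defs
begin

locale L = finite_dimensional_vector_space scale Basis
  for scale :: "'a::field_char_0 \<Rightarrow> 'b::ab_group_add \<Rightarrow> 'b" (infixr \<open>*s\<close> 75)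
  and Basis +
  fixes e1 e2 e3 e4 :: 'b
  assumes eB: "e1 \<in> Basis" "e2 \<in> Basis" "e3 \<in> Basis" "e4 \<in> Basis"
  and dist: "distinct [e1,e2,e3,e4]"
begin

definition crd :: "'b \<Rightarrow> 'b \<Rightarrow> 'a" where "crd x b = representation Basis x b"

lemma crd_add[simp]: "crd (x + y) b = crd x b + crd y b"
  unfolding crd_def using representation_add[OF independent_Basis] span_Basis by auto
lemma crd_scale[simp]: "crd (a *s x) b = a * crd x b"
  unfolding crd_def using representation_scale[OF independent_Basis] span_Basis by auto
lemma crd_diff[simp]: "crd (x - y) b = crd x b - crd y b"
  unfolding crd_def using representation_diff[OF independent_Basis] span_Basis by auto
lemma crd_neg[simp]: "crd (- x) b = - crd x b"
  unfolding crd_def using representation_neg[OF independent_Basis] span_Basis by auto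
lemma crd_zero[simp]: "crd 0 b = 0"
  unfolding crd_def using representation_zero by metis
lemma crd_basis: "b \<in> Basis \<Longrightarrow> crd b b' = (if b' = b then 1 else 0)"
  unfolding crd_def using representation_basis[OF independent_Basis] by metis

lemma crd_e[simp]:
  "crd e1 e1 = 1" "crd e1 e2 = 0" "crd e1 e3 = 0" "crd e1 e4 = 0"
  "crd e2 e1 = 0" "crd e2 e2 = 1" "crd e2 e3 = 0" "crd e2 e4 = 0"
  "crd e3 e1 = 0" "crd e3 e2 = 0" "crd e3 e3 = 1" "crd e3 e4 = 0"
  "crd e4 e1 = 0" "crd e4 e2 = 0" "crd e4 e3 = 0" "crd e4 e4 = 1"
  using dist by (auto simp: crd_basis eB)

lemma e_ne[simp]: "e1 \<noteq> 0" "e2 \<noteq> 0" "e3 \<noteq> 0" "e4 \<noteq> 0"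
  using crd_e crd_zero by (metis zero_neq_one)+

definition prj :: "'b \<Rightarrow> 'b" where
  "prj x = x - (crd x e1 *s e1 + crd x e2 *s e2 + crd x e3 *s e3 + crd x e4 *s e4)"

lemma decomp: "x = crd x e1 *s e1 + crd x e2 *s e2 + crd x e3 *s e3 + crd x e4 *s e4 + prj x"
  unfolding prj_def by simp

lemma crd_prj[simp]: "crd (prj x) e1 = 0" "crd (prj x) e2 = 0" "crd (prj x) e3 = 0" "crd (prj x) e4 = 0"
  unfolding prj_def by simp_all

lemma prj_add[simp]: "prj (x + y) = prj x + prj y"
  unfolding prj_def by (simp add: algebra_simps)
lemma prj_scale[simp]: "prj (a *s x) = a *s prj x"
  unfolding prj_def by (simp add: algebra_simps)
lemma prj_diff[simp]: "prj (x - y) = prj x - prj y"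
  unfolding prj_def by (simp add: algebra_simps)
lemma prj_neg[simp]: "prj (- x) = - prj x"
  unfolding prj_def by (simp add: algebra_simps)
lemma prj_zero[simp]: "prj 0 = 0"
  unfolding prj_def by (simp add: algebra_simps)
lemma prj_e[simp]: "prj e1 = 0" "prj e2 = 0" "prj e3 = 0" "prj e4 = 0"
  unfolding prj_def by simp_all
lemma prj_prj[simp]: "prj (prj x) = prj x"
  by (subst (2) prj_def) simp
lemma prj_f: "f \<in> Basis \<Longrightarrow> f \<notin> {e1,e2,e3,e4} \<Longrightarrow> prj f = f"
  unfolding prj_def using dist by (auto simp: crd_basis)
lemma crd_f: "f \<in> Basis \<Longrightarrow> f \<notin> {e1,e2,e3,e4} \<Longrightarrow> crd f e1 = 0 \<and> crd f e2 = 0 \<and> crd f e3 = 0 \<and> crd f e4 = 0"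
  using dist by (auto simp: crd_basis)

lemma vec_eqI:
  assumes "crd u e1 = crd w e1" "crd u e2 = crd w e2" "crd u e3 = crd w e3" "crd u e4 = crd w e4"
    "prj u = prj w"
  shows "u = w"
  by (subst decomp, subst (2) decomp) (simp add: assms)

lemma decomp_zero:
  assumes "crd x e1 = 0" "crd x e2 = 0" "crd x e3 = 0" "crd x e4 = 0" "prj x = 0"
  shows "x = 0"
proof -
  have "x = crd x e1 *s e1 + crd x e2 *s e2 + crd x e3 *s e3 + crd x e4 *s e4 + prj x" by (rule decomp)
  also have "\<dots> = 0" using assms by simp
  finally show ?thesis .
qed

lemma decomp_2:
  assumes "crd x e1 = 0" "crd x e3 = 0" "crd x e4 = 0" "prj x = 0"
  shows "x = crd x e2 *s e2"
proof -
  have "x = crd x e1 *s e1 + crd x e2 *s e2 + crd x e3 *s e3 + crd x e4 *s e4 + prj x" by (rule decomp)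
  also have "\<dots> = crd x e2 *s e2" using assms by simp
  finally show ?thesis .
qed

lemma decomp_4:
  assumes "crd x e1 = 0" "crd x e2 = 0" "crd x e3 = 0" "prj x = 0"
  shows "x = crd x e4 *s e4"
proof -
  have "x = crd x e1 *s e1 + crd x e2 *s e2 + crd x e3 *s e3 + crd x e4 *s e4 + prj x" by (rule decomp)
  also have "\<dots> = crd x e4 *s e4" using assms by simp
  finally show ?thesis .
qed

definition mut :: "'a \<Rightarrow> 'b \<Rightarrow> 'b \<Rightarrow> 'b" where
  "mut t x y = (crd x e1 * crd y e3 - crd x e3 * crd y e1) *s (e1 + e3)
     + ((crd x e2 * crd y e3 - crd x e3 * crd y e2 + crd x e1 * crd y e4 - crd x e4 * crd y e1) * t) *s (e2 + e4)
     + crd y e1 *s prj x - crd x e1 *s prj y"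

lemma crd_mut[simp]:
  "crd (mut t x y) e1 = crd x e1 * crd y e3 - crd x e3 * crd y e1"
  "crd (mut t x y) e3 = crd x e1 * crd y e3 - crd x e3 * crd y e1"
  "crd (mut t x y) e2 = (crd x e2 * crd y e3 - crd x e3 * crd y e2 + crd x e1 * crd y e4 - crd x e4 * crd y e1) * t"
  "crd (mut t x y) e4 = (crd x e2 * crd y e3 - crd x e3 * crd y e2 + crd x e1 * crd y e4 - crd x e4 * crd y e1) * t"
  "prj (mut t x y) = crd y e1 *s prj x - crd x e1 *s prj y"
  unfolding mut_def by simp_all

lemma mut_add2: "mut t x (y + z) = mut t x y + mut t x z"
  by (rule vec_eqI) (simp_all add: algebra_simps)
lemma mut_scale2: "mut t x (c *s y) = c *s mut t x y"
  by (rule vec_eqI) (simp_all add: algebra_simps)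
lemma mut_antisym: "mut t x y = - mut t y x"
  by (rule vec_eqI) (simp_all add: algebra_simps)
lemma mut_add1: "mut t (y + z) x = mut t y x + mut t z x"
  by (rule vec_eqI) (simp_all add: algebra_simps)
lemma mut_scale1: "mut t (c *s y) x = c *s mut t y x"
  by (rule vec_eqI) (simp_all add: algebra_simps)

lemma mut_C2: "mut t \<in> C2 scale"
  unfolding C2_def Vector_Spaces.linear_iff
  using mut_add1 mut_add2 mut_scale1 mut_scale2 mut_antisym vector_space_axioms by blast

definition D0 :: "'b \<Rightarrow> 'b" where "D0 x = crd x e1 *s e2 + crd x e3 *s e4"

lemma D0_lin: "Vector_Spaces.linear scale scale D0"
  unfolding Vector_Spaces.linear_iff D0_def by (auto simp: vector_space_axioms algebra_simps)

lemma D0_e[simp]: "D0 e1 = e2" "D0 e2 = 0" "D0 e3 = e4" "D0 e4 = 0"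
  unfolding D0_def by simp_all

lemma D0_ne: "D0 \<noteq> (\<lambda>x. 0)"
proof
  assume "D0 = (\<lambda>x. 0)"
  then have "D0 e1 = 0" by simp
  then show False unfolding D0_def by simp
qed

lemma D0_der: "t \<noteq> 0 \<Longrightarrow> D0 \<in> gen_derivations scale t 1 0 (mut t)"
proof -
  have "t *s D0 (mut t x y) = mut t (D0 x) y" for x y
  proof -
    have l: "D0 (mut t x y) = (crd x e1 * crd y e3 - crd x e3 * crd y e1) *s (e2 + e4)"
      unfolding D0_def by (simp add: algebra_simps)
    show ?thesis unfolding l by (rule vec_eqI) (simp_all add: D0_def algebra_simps)
  qed
  then show ?thesis unfolding gen_derivations_def using D0_lin by simp
qed

lemma char:
  assumes Dl: "Vector_Spaces.linear scale scale D"
  and E: "\<And>X Y. s *s D (mut t X Y) = mut t (D X) Y"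
  and s0: "s \<noteq> 0" "s \<noteq> 1" "s + 1 \<noteq> 0" "s + t \<noteq> 0" "t \<noteq> 0"
  shows "D = (\<lambda>x. crd (D e1) e2 *s D0 x) \<and> (s \<noteq> t \<longrightarrow> crd (D e1) e2 = 0)"
proof -
  interpret Dl: Vector_Spaces.linear scale scale D by (rule Dl)
  have C: "s * crd (D (mut t X Y)) b = crd (mut t (D X) Y) b" for X Y b
    using E crd_scale by metis
  have P: "s *s prj (D (mut t X Y)) = prj (mut t (D X) Y)" for X Y
    using E prj_scale by metis
  note ss = mut_def Dl.add Dl.scale Dl.zero Dl.diff Dl.neg s0 algebra_simps
  have d31: "crd (D e1) e3 = 0" using C[of e1 e1 e3] by (simp add: ss)
  have d41: "crd (D e1) e4 = 0" using C[of e1 e1 e2] by (simp add: ss)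
  have r1: "prj (D e1) = 0" using P[of e1 e1] by (simp add: ss)
  have d32: "crd (D e2) e3 = 0" using C[of e2 e2 e2] by (simp add: ss)
  have d13: "crd (D e3) e1 = 0" using C[of e3 e3 e1] by (simp add: ss)
  have d23: "crd (D e3) e2 = 0" using C[of e3 e3 e2] by (simp add: ss)
  have d14: "crd (D e4) e1 = 0" using C[of e4 e4 e2] by (simp add: ss)
  have d42: "crd (D e2) e4 = 0" using C[of e2 e1 e2] by (simp add: ss)
  have r2: "prj (D e2) = 0" using P[of e2 e1] by (simp add: ss)
  have d24: "crd (D e4) e2 = 0" using C[of e4 e3 e2] by (simp add: ss)
  have d12: "crd (D e2) e1 = 0" using C[of e2 e4 e2] by (simp add: ss)
  have d34: "crd (D e4) e3 = 0" using C[of e4 e2 e2] by (simp add: ss)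
  have d11: "crd (D e1) e1 = 0" using C[of e1 e3 e1] d13 by (simp add: ss)
  have d33: "crd (D e3) e3 = 0" using C[of e1 e3 e3] d31 d11 by (simp add: ss)
  have d21: "s * crd (D e1) e2 = crd (D e1) e2 * t" using C[of e1 e3 e2] d23 by (simp add: ss)
  have d43: "s * crd (D e3) e4 = crd (D e1) e2 * t" using C[of e1 e3 e4] d41 by (simp add: ss)
  have r3: "prj (D e3) = 0" using P[of e1 e3] r1 by (simp add: ss)
  have d22: "crd (D e2) e2 = 0" using C[of e2 e3 e2] d24 by (simp add: ss)
  have d44: "crd (D e4) e4 = 0" using C[of e2 e3 e4] d42 d22 by (simp add: ss)
  have r4: "prj (D e4) = 0" using P[of e2 e3] r2 by (simp add: ss)
  have De1: "D e1 = crd (D e1) e2 *s e2" using decomp_2[OF d11 d31 d41 r1] .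
  have De2: "D e2 = 0" using decomp_zero[OF d12 d22 d32 d42 r2] .
  have De3: "D e3 = crd (D e3) e4 *s e4" using decomp_4[OF d13 d23 d33 r3] .
  have De4: "D e4 = 0" using decomp_zero[OF d14 d24 d34 d44 r4] .
  have z: "s \<noteq> t \<longrightarrow> crd (D e1) e2 = 0"
  proof
    assume "s \<noteq> t"
    from d21 have "(s - t) * crd (D e1) e2 = 0" by (simp add: algebra_simps)
    with \<open>s \<noteq> t\<close> show "crd (D e1) e2 = 0" by simp
  qed
  have k: "crd (D e3) e4 = crd (D e1) e2"
  proof (cases "s = t")
    case True
    with d43 have "s * (crd (D e3) e4 - crd (D e1) e2) = 0" by (simp add: algebra_simps)
    with s0 show ?thesis by simp
  next
    case False
    with z d43 s0 show ?thesis by simp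
  qed
  have Df: "D f = 0" if f: "f \<in> Basis" "f \<notin> {e1,e2,e3,e4}" for f
  proof -
    have mf: "mut t f e1 = f" using crd_f[OF f] prj_f[OF f] by (simp add: mut_def)
    have a1: "s * crd (D f) e1 = - crd (D f) e3" using C[of f e1 e1] by (simp add: mf)
    have a3: "s * crd (D f) e3 = - crd (D f) e3" using C[of f e1 e3] by (simp add: mf)
    have a2: "s * crd (D f) e2 = - (crd (D f) e4 * t)" using C[of f e1 e2] by (simp add: mf)
    have a4: "s * crd (D f) e4 = - (crd (D f) e4 * t)" using C[of f e1 e4] by (simp add: mf)
    have ap: "s *s prj (D f) = prj (D f)" using P[of f e1] by (simp add: mf)
    from a3 have "(s + 1) * crd (D f) e3 = 0" by (simp add: algebra_simps)
    with s0 have c3: "crd (D f) e3 = 0" by simp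
    from a4 have "(s + t) * crd (D f) e4 = 0" by (simp add: algebra_simps)
    with s0 have c4: "crd (D f) e4 = 0" by simp
    from a1 c3 s0 have c1: "crd (D f) e1 = 0" by simp
    from a2 c4 s0 have c2: "crd (D f) e2 = 0" by simp
    from ap have "(s - 1) *s prj (D f) = 0" by (simp add: algebra_simps)
    with s0 have cp: "prj (D f) = 0" by simp
    show ?thesis using decomp_zero[OF c1 c2 c3 c4 cp] .
  qed
  interpret vp: vector_space_pair scale scale by unfold_locales
  have lin2: "Vector_Spaces.linear scale scale (\<lambda>x. crd (D e1) e2 *s D0 x)"
    using D0_lin by (simp add: Vector_Spaces.linear_iff algebra_simps)
  have "D x = crd (D e1) e2 *s D0 x" for x
  proof (rule vp.linear_eq_on[OF Dl lin2])
    show "x \<in> span Basis" using span_Basis by simp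
    fix b assume b: "b \<in> Basis"
    show "D b = crd (D e1) e2 *s D0 b"
    proof (cases "b \<in> {e1,e2,e3,e4}")
      case True
      then consider "b = e1" | "b = e2" | "b = e3" | "b = e4" by blast
      then show ?thesis
      proof cases
        case 1 then show ?thesis by (metis De1 D0_e(1))
      next
        case 2 then show ?thesis by (metis De2 D0_e(2) scale_zero_right)
      next
        case 3 then show ?thesis by (metis De3 D0_e(3) k)
      next
        case 4 then show ?thesis by (metis De4 D0_e(4) scale_zero_right)
      qed
    next
      case False
      then show ?thesis using Df[OF b False] crd_f[OF b False] by (simp add: D0_def)
    qed
  qed
  then have "D = (\<lambda>x. crd (D e1) e2 *s D0 x)" by (rule ext)
  then show ?thesis using z by (rule conjI)
qed

lemma fs_vs: "vector_space (fun_scale scale)"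
  unfolding vector_space_def module_def fun_scale_def
  by (auto simp: fun_eq_iff algebra_simps)

lemma phi_val:
  assumes s0: "s \<noteq> 0" "s \<noteq> 1" "s + 1 \<noteq> 0" "s + t \<noteq> 0" "t \<noteq> 0"
  shows "phi scale s (mut t) = (if s = t then 1 else 0)"
proof -
  interpret FS: vector_space "fun_scale scale" by (rule fs_vs)
  define G where "G = gen_derivations scale s 1 0 (mut t)"
  have memG: "D \<in> G \<Longrightarrow> D = fun_scale scale (crd (D e1) e2) D0 \<and> (s \<noteq> t \<longrightarrow> crd (D e1) e2 = 0)" for D
  proof -
    assume "D \<in> G"
    then have l: "Vector_Spaces.linear scale scale D" and E: "\<And>X Y. s *s D (mut t X Y) = mut t (D X) Y"
      unfolding G_def gen_derivations_def by auto
    show ?thesis using char[OF l E s0] unfolding fun_scale_def .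
  qed
  have phiG: "phi scale s (mut t) = FS.dim G" unfolding phi_def G_def by simp
  show ?thesis
  proof (cases "s = t")
    case True
    have D0G: "D0 \<in> G" unfolding G_def True using D0_der[OF s0(5)] .
    have "G \<subseteq> FS.span {D0}"
      using memG FS.span_singleton by blast
    then have "FS.span G \<subseteq> FS.span {D0}" using FS.span_minimal FS.subspace_span by blast
    moreover have "FS.span {D0} \<subseteq> FS.span G" using D0G FS.span_mono by blast
    ultimately have sp: "FS.span {D0} = FS.span G" by blast
    have ind: "FS.independent {D0}" using D0_ne by (simp add: zero_fun_def)
    have "FS.dim G = card {D0}" by (rule FS.dim_eq_card[OF sp ind])
    then show ?thesis using phiG True by simp
  next
    case False
    have "G \<subseteq> {0}"
    proof
      fix D assume "D \<in> G"
      from memG[OF this] False obtain c where "D = fun_scale scale c D0" "c = 0" by blast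
      then show "D \<in> {0}" by (simp add: fun_scale_def zero_fun_def)
    qed
    then have "FS.span G \<subseteq> {0}"
      using FS.span_minimal FS.subspace_span FS.span_empty by (metis FS.span_mono FS.span_span)
    then have sp: "FS.span {} = FS.span G" using FS.span_zero by auto
    have "FS.dim G = 0" using FS.dim_eq_card[OF sp FS.independent_empty] by simp
    then show ?thesis using phiG False by simp
  qed
qed

lemma main: "infinite ((\<lambda>t. restrict (phi scale t) (C2 scale)) ` (UNIV :: 'a set))"
proof
  define F where "F = (\<lambda>t. restrict (phi scale t) (C2 scale))"
  define h where "h = (\<lambda>k::nat. (of_nat (k + 2) :: 'a))"
  assume fin: "finite (F ` UNIV)"
  have hprops: "h i \<noteq> 0" "h i \<noteq> 1" "h i + 1 \<noteq> 0" "h i + h j \<noteq> 0" for i j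
  proof -
    have ne: "m \<noteq> n \<Longrightarrow> (of_nat m :: 'a) \<noteq> of_nat n" for m n by simp
    have z: "(0::'a) = of_nat 0" "(1::'a) = of_nat 1" by simp_all
    have a: "h i + 1 = of_nat (i + 3)" unfolding h_def by simp
    have b: "h i + h j = of_nat (i + j + 4)" unfolding h_def by simp
    show "h i \<noteq> 0" "h i \<noteq> 1" "h i + 1 \<noteq> 0" "h i + h j \<noteq> 0"
      unfolding a b unfolding h_def z by (rule ne; simp)+
  qed
  have injh: "inj h" unfolding h_def inj_def by simp
  have "inj_on F (range h)"
  proof (rule inj_onI)
    fix a b assume "a \<in> range h" "b \<in> range h" and eq: "F a = F b"
    then obtain i j where ij: "a = h i" "b = h j" by auto
    have "F a (mut b) = F b (mut b)" using eq by simp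
    then have p0: "phi scale a (mut b) = phi scale b (mut b)"
      unfolding F_def using mut_C2 by simp
    have p1: "phi scale (h i) (mut (h j)) = (if h i = h j then 1 else 0)"
      by (rule phi_val) (rule hprops)+
    have p2: "phi scale (h j) (mut (h j)) = 1"
      using phi_val[of "h j" "h j"] hprops by simp
    have "(if h i = h j then 1 else 0 :: nat) = 1"
      using p0 p1 p2 unfolding ij by simp
    then have "h i = h j" by (cases "h i = h j") simp_all
    then show "a = b" using ij by simp
  qed
  moreover have "finite (F ` range h)" using fin by (rule finite_subset[rotated]) auto
  ultimately have "finite (range h)" using finite_image_iff by blast
  then show False using injh finite_imageD infinite_UNIV_nat by blast
qed

end

theorem theorem2p7:
  fixes sc :: "'k::field_char_0 \<Rightarrow> 'v::ab_group_add \<Rightarrow> 'v"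
    and B :: "'v set" and n :: nat
  assumes "finite_dimensional_vector_space sc B"
    and "card B = n"
    and "n \<ge> 4"
  shows "infinite ((\<lambda>t. restrict (phi sc t) (C2 sc)) ` (UNIV :: 'k set))"
proof -
  interpret V: finite_dimensional_vector_space sc B by (rule assms(1))
  have fin: "finite B" by (rule V.finite_Basis)
  obtain A where A: "A \<subseteq> B" "card A = 4"
    using obtain_subset_with_card_n[of 4 B] assms(2,3) by auto
  obtain xs where xs: "set xs = A" "distinct xs"
    using finite_distinct_list[OF finite_subset[OF A(1) fin]] by blast
  have len: "length xs = 4" using distinct_card[OF xs(2)] xs(1) A(2) by simp
  have "\<exists>a b c d. xs = [a,b,c,d]" using len by (auto simp: length_Suc_conv numeral_eq_Suc)
  then obtain a b c d where abcd: "xs = [a,b,c,d]" by blast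
  have "L sc B a b c d"
    unfolding L_def L_axioms_def using assms(1) xs A(1) abcd by auto
  then show ?thesis by (rule L.main)
qed

end
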